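(* Let $t\geq 1$ be an integer, $m=8t+4$, $n=2^m+1$, and let $\delta_1,\dots,\delta_5$ be defined as follows: $\delta_1=\frac{3n}{17}$; if $t=1$, $\delta_2=\delta_1-6$, $\delta_3=\delta_2-24$, $\delta_4=\delta_3-2$, $\delta_5=\delta_4-38$; if $t=2$, $\delta_2=\delta_1-\frac{\delta_1+45}{128}$, $\delta_3=\delta_2-90$, $\delta_4=\delta_3-6$, $\delta_5=\delta_4-384$; if $t\geq 3$, $\delta_2=\delta_1-\frac{\delta_1+45}{128}$, $\delta_3=\delta_2-90$, $\delta_4=\delta_3-22950$, $\delta_5=\delta_4-90$. If $1\leq x\leq 2^{4t+3}+2^{4t+2}+2^{4t+1}+1$ or $x\in\{\delta_2,\delta_3,\delta_4,\delta_5\}$, then $|C_x|=2m$. Moreover $|C_{\delta_1}|=8$.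
   Context: For $n=2^m+1$ and an integer $x$, the 2-cyclotomic coset of $x$ modulo $n$ is $C_x=\{x\cdot 2^{j} \bmod n : j\geq 0\}\subseteq\{0,1,\dots,n-1\}$, and $|C_x|$ its cardinality. *)

theory Defs
  imports Main
begin

definition cyc_coset :: "nat \<Rightarrow> int \<Rightarrow> int set" where
  "cyc_coset n x = {(x * 2 ^ j) mod int n | j :: nat. True}"

definition mpar :: "nat \<Rightarrow> nat" where "mpar t = 8 * t + 4"
definition npar :: "nat \<Rightarrow> nat" where "npar t = 2 ^ mpar t + 1"

text \<open>The values delta_1, ..., delta_5 (all integers: 17 divides n and 128 divides delta_1 + 45).\<close>
definition delta1 :: "nat \<Rightarrow> int" where
  "delta1 t = 3 * int (npar t) div 17"

definition delta2 :: "nat \<Rightarrow> int" where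
  "delta2 t = (if t = 1 then delta1 t - 6 else delta1 t - (delta1 t + 45) div 128)"

definition delta3 :: "nat \<Rightarrow> int" where
  "delta3 t = (if t = 1 then delta2 t - 24 else delta2 t - 90)"

definition delta4 :: "nat \<Rightarrow> int" where
  "delta4 t = (if t = 1 then delta3 t - 2 else if t = 2 then delta3 t - 6 else delta3 t - 22950)"

definition delta5 :: "nat \<Rightarrow> int" where
  "delta5 t = (if t = 1 then delta4 t - 38 else if t = 2 then delta4 t - 384 else delta4 t - 90)"

end

theory Submission imports Defs begin

lemma dvd_pow_diff: "((a::int) - b) dvd (a^q - b^q)"
proof (induction q)
  case 0 then show ?case by simp
next
  case (Suc q)
  have "a^Suc q - b^Suc q = a*(a^q - b^q) + b^q*(a-b)" by (simp add: algebra_simps)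
  with Suc show ?case by simp
qed

lemma cong_mult_pow:
  fixes n :: int
  assumes "(x*2^d) mod n = x mod n"
  shows "(x*2^(d*q + r)) mod n = (x*2^r) mod n"
proof (induction q)
  case 0 then show ?case by simp
next
  case (Suc q)
  have "x*2^(d*Suc q + r) = (x*2^(d*q+r))*2^d" by (simp add: power_add algebra_simps)
  then have "(x*2^(d*Suc q + r)) mod n = ((x*2^(d*q+r)) mod n * 2^d) mod n"
    by (metis mod_mult_left_eq)
  also have "\<dots> = ((x*2^r) * 2^d) mod n" using Suc by (metis mod_mult_left_eq)
  also have "\<dots> = ((x*2^d) mod n * 2^r) mod n" by (metis mod_mult_left_eq mult.commute mult.left_commute)
  also have "\<dots> = (x*2^r) mod n" using assms by (metis mod_mult_left_eq)
  finally show ?case .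
qed

lemma orbit_card:
  fixes n :: nat and x :: int
  assumes odd: "odd n" and d0: "d > 0"
    and per: "(x*2^d) mod int n = x mod int n"
    and mn: "\<forall>j. 0 < j \<and> j < d \<longrightarrow> (x*2^j) mod int n \<noteq> x mod int n"
  shows "card (cyc_coset n x) = d"
proof -
  have eq: "cyc_coset n x = (\<lambda>j. (x*2^j) mod int n) ` {..<d}"
  proof
    show "cyc_coset n x \<subseteq> (\<lambda>j. (x*2^j) mod int n) ` {..<d}"
    proof
      fix y assume "y \<in> cyc_coset n x"
      then obtain j where y: "y = (x*2^j) mod int n" unfolding cyc_coset_def by auto
      have "j = d*(j div d) + j mod d" by simp
      then have "y = (x*2^(j mod d)) mod int n" using cong_mult_pow[OF per, of "j div d" "j mod d"] y by metis
      moreover have "j mod d < d" using d0 by simp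
      ultimately show "y \<in> (\<lambda>j. (x*2^j) mod int n) ` {..<d}" by blast
    qed
  next
    show "(\<lambda>j. (x*2^j) mod int n) ` {..<d} \<subseteq> cyc_coset n x" unfolding cyc_coset_def by auto
  qed
  have cop: "coprime (2::int) (int n)" using odd by simp
  have inj: "inj_on (\<lambda>j. (x*2^j) mod int n) {..<d}"
  proof (rule inj_onI)
    fix i j assume i: "i \<in> {..<d}" and j: "j \<in> {..<d}" and e: "(x*2^i) mod int n = (x*2^j) mod int n"
    show "i = j"
    proof (rule ccontr)
      assume "i \<noteq> j"
      then consider "i < j" | "j < i" by linarith
      then show False
      proof cases
        case 1
        have "int n dvd x*2^j - x*2^i" using e by (metis mod_eq_dvd_iff)
        moreover have "x*2^j - x*2^i = 2^i*(x*2^(j-i) - x)" using 1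
          by (simp add: algebra_simps power_add[symmetric])
        ultimately have "int n dvd 2^i*(x*2^(j-i) - x)" by simp
        moreover have "coprime (int n) (2^i)" using cop by (simp add: coprime_commute)
        ultimately have "int n dvd (x*2^(j-i) - x)" using coprime_dvd_mult_right_iff by blast
        then have "(x*2^(j-i)) mod int n = x mod int n" by (metis mod_eq_dvd_iff)
        then show False using mn 1 j by auto
      next
        case 2
        have "int n dvd x*2^i - x*2^j" using e by (metis mod_eq_dvd_iff)
        moreover have "x*2^i - x*2^j = 2^j*(x*2^(i-j) - x)" using 2
          by (simp add: algebra_simps power_add[symmetric])
        ultimately have "int n dvd 2^j*(x*2^(i-j) - x)" by simp
        moreover have "coprime (int n) (2^j)" using cop by (simp add: coprime_commute)
        ultimately have "int n dvd (x*2^(i-j) - x)" using coprime_dvd_mult_right_iff by blast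
        then have "(x*2^(i-j)) mod int n = x mod int n" by (metis mod_eq_dvd_iff)
        then show False using mn 2 i by auto
      qed
    qed
  qed
  show ?thesis using eq inj by (simp add: card_image)
qed


lemma unit_aux: "(c::int) dvd 2 \<Longrightarrow> odd c \<Longrightarrow> is_unit c"
  by (meson dvd_add_triv_left_iff dvd_trans even_plus_one_iff)

lemma coprime_aux:
  assumes "k > 0"
  shows "coprime (int (2^(k*q)+1)) ((2::int)^k - 1)"
proof (rule coprimeI)
  fix c assume c1: "c dvd int (2^(k*q)+1)" and c2: "c dvd (2::int)^k - 1"
  have "((2::int)^k - 1) dvd ((2^k)^q - 1^q)" by (rule dvd_pow_diff)
  then have "((2::int)^k - 1) dvd (2^(k*q) - 1)" by (simp add: power_mult)
  then have "c dvd (2::int)^(k*q) - 1" using c2 dvd_trans by blast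
  moreover have "c dvd (2::int)^(k*q) + 1" using c1 by (simp add: add.commute)
  ultimately have "c dvd ((2::int)^(k*q) + 1) - (2^(k*q) - 1)" using dvd_diff by blast
  then have "c dvd 2" by simp
  moreover have "odd ((2::int)^k - 1)" using assms by simp
  then have "odd c" using c2 dvd_trans by blast
  ultimately show "is_unit c" using unit_aux by blast
qed

lemma crit:
  fixes m :: nat and x :: int
  assumes m0: "m > 0" and nz: "x mod int (2^m+1) \<noteq> 0"
    and H: "\<forall>k q. m = k*q \<longrightarrow> odd q \<longrightarrow> 3 \<le> q \<longrightarrow> \<not> int (2^m+1) dvd x*(2^k+1)"
  shows "card (cyc_coset (2^m+1) x) = 2*m"
proof (rule orbit_card)
  let ?n = "int (2^m+1)"
  show "odd ((2::nat)^m+1)" using m0 by simp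
  show "0 < 2*m" using m0 by simp
  have pp: "(2::int)^(2*m) = 2^m*2^m" by (simp add: mult_2 power_add)
  have e2: "x*2^(2*m) - x = x*(2^m - 1)*?n" unfolding pp by (simp add: algebra_simps)
  have per: "(x*2^(2*m)) mod ?n = x mod ?n"
    using e2 by (metis dvd_triv_right mod_eq_dvd_iff)
  then show "(x*2^(2*m)) mod ?n = x mod ?n" .
  have cop2: "coprime ?n 2" using m0 by simp
  show "\<forall>j. 0 < j \<and> j < 2*m \<longrightarrow> (x*2^j) mod ?n \<noteq> x mod ?n"
  proof (intro allI impI notI)
    fix j assume j: "0 < j \<and> j < 2*m" and pj: "(x*2^j) mod ?n = x mod ?n"
    define P where "P = (\<lambda>j. 0 < j \<and> (x*2^j) mod ?n = x mod ?n)"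
    have Pj: "P j" using j pj P_def by simp
    define d where "d = (LEAST j. P j)"
    have Pd: "P d" using Pj d_def by (metis LeastI)
    have dj: "d \<le> j" using Pj d_def by (metis Least_le)
    have d0: "0 < d" and dper: "(x*2^d) mod ?n = x mod ?n" using Pd P_def by auto
    define r where "r = (2*m) mod d"
    define q where "q = (2*m) div d"
    have dq: "2*m = d*q + r" using r_def q_def by simp
    have "(x*2^(d*q+r)) mod ?n = (x*2^r) mod ?n" by (rule cong_mult_pow[OF dper])
    then have xr: "(x*2^r) mod ?n = x mod ?n" using per by (simp only: dq[symmetric])
    have rd: "r < d" using r_def d0 by simp
    have r0: "r = 0"
    proof (rule ccontr)
      assume "r \<noteq> 0"
      then have "P r" using xr P_def by simp
      moreover have "\<not> P r" using not_less_Least[of r P] rd d_def by blast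
      ultimately show False by blast
    qed
    then have dq': "2*m = d*q" using dq by simp
    have q2: "q \<ge> 2"
    proof (rule ccontr)
      assume "\<not> q \<ge> 2"
      then have "q \<le> 1" by simp
      then have "d*q \<le> d" by (cases q) auto
      then show False using dq' dj j by linarith
    qed
    show False
    proof (cases "even q")
      case True
      then obtain q' where q': "q = 2*q'" by blast
      have mdq: "m = d*q' + 0" using dq' q' by simp
      have "(x*2^m) mod ?n = x mod ?n"
        using cong_mult_pow[OF dper, of q' 0] mdq by simp
      moreover have "x*2^m + x = x*?n" by (simp add: algebra_simps)
      ultimately have "?n dvd x*2^m + x" by simp
      moreover have "?n dvd x*2^m - x" using \<open>(x*2^m) mod ?n = x mod ?n\<close> by (metis mod_eq_dvd_iff)
      ultimately have "?n dvd (x*2^m + x) - (x*2^m - x)" using dvd_diff by blast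
      then have "?n dvd 2*x" by simp
      then have "?n dvd x" using cop2 coprime_dvd_mult_right_iff by blast
      then show False using nz by simp
    next
      case False
      then have q3: "3 \<le> q" using q2 by presburger
      have "even d" using dq' False by (metis dvd_triv_left even_mult_iff)
      then obtain k where k: "d = 2*k" by blast
      have mk: "m = k*q" using dq' k by simp
      have k0: "k > 0" using d0 k by simp
      have "?n dvd x*2^d - x" using dper by (metis mod_eq_dvd_iff)
      moreover have "x*2^d - x = (2^k - 1) * (x*(2^k+1))"
      proof -
        have "(2::int)^d = 2^k*2^k" by (simp add: k mult_2 power_add)
        then show ?thesis by (simp add: algebra_simps)
      qed
      ultimately have "?n dvd (2^k - 1) * (x*(2^k+1))" by simp
      moreover have "coprime ?n ((2::int)^k - 1)" using coprime_aux[OF k0, of q] mk by simp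
      ultimately have "?n dvd x*(2^k+1)" using coprime_dvd_mult_right_iff by blast
      moreover have oq: "odd q" using False by simp
      ultimately show False using H[rule_format, OF mk oq q3] by blast
    qed
  qed
qed


lemma pow_mod_aux: "(2::int)^(8*(s+1)+4) mod 2176 = 1920"
proof (induction s)
  case 0 then show ?case by simp
next
  case (Suc s)
  have "(2::int)^(8*(Suc s+1)+4) = 256 * 2^(8*(s+1)+4)" by (simp add: power_add)
  then have "(2::int)^(8*(Suc s+1)+4) mod 2176 = (256 * (2^(8*(s+1)+4) mod 2176)) mod 2176"
    by (metis mod_mult_right_eq)
  then show ?case using Suc by simp
qed

lemma pow_mod: "t \<ge> 1 \<Longrightarrow> (2::int)^(8*t+4) mod 2176 = 1920"
  using pow_mod_aux[of "t-1"] by simp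

lemma npar_int: "int (npar t) = 2^(8*t+4) + 1"
  by (simp add: npar_def mpar_def)

lemma n_facts:
  assumes "t \<ge> 1"
  shows "17 * delta1 t = 3 * int (npar t)" and "128 dvd delta1 t + 45"
proof -
  obtain a where a: "(2::int)^(8*t+4) = 2176*a + 1920"
    using pow_mod[OF assms] by (metis div_mult_mod_eq mult.commute)
  have n: "int (npar t) = 17*(128*a+113)" using a npar_int by simp
  then show d: "17 * delta1 t = 3 * int (npar t)" unfolding delta1_def by simp
  have "17 * (delta1 t + 45) = 17 * (128 * (3*a+3))" using d n by simp
  then have "delta1 t + 45 = 128 * (3*a+3)" by simp
  then show "128 dvd delta1 t + 45" by simp
qed

lemma kform:
  fixes t k q :: nat
  assumes "8*t+4 = k*q" "odd q" "3 \<le> q"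
  shows "\<exists>e. k = 4*e \<and> odd e \<and> 3*k \<le> 8*t+4"
proof -
  have "3*k \<le> k*q" using assms(3) by simp
  moreover have "(4::nat) dvd k*q" using assms(1) by presburger
  moreover have "coprime (4::nat) q"
  proof -
    have "coprime (2::nat) q" using assms(2) by simp
    then have "coprime ((2::nat)^2) q" using iffD2[OF coprime_power_left_iff[of 2 2 q]] by blast
    then show ?thesis by (simp add: power2_eq_square)
  qed
  ultimately obtain e where e: "k = 4*e" using coprime_dvd_mult_left_iff by (metis dvd_def)
  then have "2*t+1 = e*q" using assms(1) by simp
  then have "odd e" by (metis even_mult_iff even_add odd_one even_mult_iff dvd_triv_left)
  then show ?thesis using e \<open>3*k \<le> k*q\<close> assms(1) by auto
qed

lemma dvd_n:
  assumes "odd q" shows "(2::int)^k + 1 dvd 2^(k*q) + 1"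
  using dvd_pow_diff[of "2^k" "-1" q] assms by (simp add: power_mult)

lemma dvd_17:
  assumes "odd e" shows "(17::int) dvd 2^(4*e) + 1"
  using dvd_pow_diff[of 16 "-1" e] assms by (simp add: power_mult)


lemma not_dvd_small: "0 < (y::int) \<Longrightarrow> y < n \<Longrightarrow> \<not> n dvd y"
  using zdvd_imp_le by fastforce

lemma small_ok:
  fixes x :: int
  assumes t: "t \<ge> 1" and x1: "1 \<le> x" and xb: "x \<le> 2^(4*t+3) + 2^(4*t+2) + 2^(4*t+1) + 1"
  shows "card (cyc_coset (npar t) x) = 2 * mpar t"
proof -
  have np: "npar t = 2^(mpar t)+1" by (simp add: npar_def)
  have m: "mpar t = 8*t+4" by (simp add: mpar_def)
  have p4: "(2::int)^(4*t+4) = 16*2^(4*t)" "(2::int)^(4*t+3) = 8*2^(4*t)"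
     "(2::int)^(4*t+2) = 4*2^(4*t)" "(2::int)^(4*t+1) = 2*2^(4*t)" by (simp_all add: power_add)
  have "(1::int) \<le> 2^(4*t)" by simp
  then have xlt: "x < 2^(4*t+4)" using xb p4 by linarith
  have pw: "(2::int)^(4*t+4) \<le> 2^(8*t+4)" by (rule power_increasing) auto
  have "x < 2^(8*t+4)+1" using xlt pw by linarith
  then have xn: "x < 2^(mpar t)+1" using m by simp
  have nz: "x mod int (2^(mpar t)+1) \<noteq> 0" using xn x1 by simp
  have H: "\<forall>k q. mpar t = k*q \<longrightarrow> odd q \<longrightarrow> 3 \<le> q \<longrightarrow> \<not> int (2^(mpar t)+1) dvd x*(2^k+1)"
  proof (intro allI impI)
    fix k q assume mk: "mpar t = k*q" and oq: "odd q" and q3: "3 \<le> q"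
    obtain e where e: "k = 4*e" "odd e" "3*k \<le> 8*t+4" using kform[of t k q] mk oq q3 m by auto
    have pos: "0 < x*(2^k+1)" using x1 by simp
    have "x*(2^k+1) < 2^(mpar t)+1"
    proof (cases "t = 1")
      case True
      then have "e = 1" using e by presburger
      then have "k = 4" using e by simp
      moreover have "x \<le> 225" using xb True by simp
      ultimately show ?thesis using True m by simp
    next
      case False
      then have "k + 4*t+5 \<le> 8*t+4" using e t by linarith
      have "x*(2^k+1) \<le> x*2^(k+1)" using x1 by (intro mult_left_mono) auto
      also have "\<dots> < 2^(4*t+4) * 2^(k+1)" using xlt by (intro mult_strict_right_mono) auto
      also have "\<dots> = 2^(k+4*t+5)" by (simp add: power_add mult_ac)
      also have "\<dots> \<le> (2::int)^(8*t+4)" by (rule power_increasing) (use \<open>k + 4*t+5 \<le> 8*t+4\<close> in auto)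
      finally show ?thesis using m by simp
    qed
    then show "\<not> int (2^(mpar t)+1) dvd x*(2^k+1)" using pos not_dvd_small by simp
  qed
  have m0: "mpar t > 0" using m by simp
  show ?thesis using crit[OF m0 nz H] np by simp
qed


lemma delta1_ok:
  assumes t: "t \<ge> 1"
  shows "card (cyc_coset (npar t) (delta1 t)) = 8"
proof (rule orbit_card)
  have n: "int (npar t) = 2^(8*t+4)+1" by (rule npar_int)
  have d17: "17 * delta1 t = 3 * int (npar t)" using n_facts[OF t] by simp
  show "odd (npar t)" by (simp add: npar_def mpar_def)
  show "(0::nat) < 8" by simp
  have "delta1 t * 2^8 - delta1 t = 45 * int (npar t)" using d17 by simp
  then show "(delta1 t * 2^8) mod int (npar t) = delta1 t mod int (npar t)"
    by (metis dvd_triv_right mod_eq_dvd_iff)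
  have npos: "int (npar t) > 0" using n by simp
  show "\<forall>j. 0 < j \<and> j < 8 \<longrightarrow> (delta1 t * 2^j) mod int (npar t) \<noteq> delta1 t mod int (npar t)"
  proof (intro allI impI notI)
    fix j :: nat assume j: "0 < j \<and> j < 8" and e: "(delta1 t * 2^j) mod int (npar t) = delta1 t mod int (npar t)"
    have "int (npar t) dvd delta1 t * 2^j - delta1 t" using e by (metis mod_eq_dvd_iff)
    then have "int (npar t) dvd delta1 t * (2^j - 1)" by (simp add: algebra_simps)
    then have "17 * int (npar t) dvd 17 * (delta1 t * (2^j - 1))" by simp
    moreover have "17 * (delta1 t * (2^j - 1)) = int (npar t) * (3 * (2^j - 1))"
    proof -
      have "17 * (delta1 t * (2^j - 1)) = (17 * delta1 t) * (2^j - 1)" by (simp only: mult.assoc)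
      also have "\<dots> = int (npar t) * (3 * (2^j - 1))" unfolding d17 by (simp only: ac_simps)
      finally show ?thesis .
    qed
    ultimately have "17 * int (npar t) dvd int (npar t) * (3 * (2^j - 1))" by simp
    then have "int (npar t) * 17 dvd int (npar t) * (3 * (2^j - 1))" by (simp add: mult.commute)
    then have h: "(17::int) dvd 3 * (2^j - 1)" using npos by (simp only: dvd_mult_cancel_left) simp
    have "j = 1 \<or> j = 2 \<or> j = 3 \<or> j = 4 \<or> j = 5 \<or> j = 6 \<or> j = 7" using j by presburger
    then show False using h by (auto simp: dvd_eq_mod_eq_0)
  qed
qed


lemma delta_t1:
  assumes x: "x \<in> {delta2 1, delta3 1, delta4 1, delta5 1}"
  shows "card (cyc_coset (npar 1) x) = 2 * mpar 1"
proof -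
  have d: "delta1 1 = 723" by (simp add: delta1_def npar_def mpar_def)
  have d': "delta1 (Suc 0) = 723" using d by simp
  have xs: "x \<in> {717, 693, 691, 653}" using x by (simp add: delta2_def delta3_def delta4_def delta5_def d d')
  have np: "npar 1 = 2^(mpar 1)+1" by (simp add: npar_def)
  have m: "mpar 1 = 12" by (simp add: mpar_def)
  have nz: "x mod int (2^(mpar 1)+1) \<noteq> 0" using xs m by auto
  have H: "\<forall>k q. mpar 1 = k*q \<longrightarrow> odd q \<longrightarrow> 3 \<le> q \<longrightarrow> \<not> int (2^(mpar 1)+1) dvd x*(2^k+1)"
  proof (intro allI impI)
    fix k q assume mk: "mpar 1 = k*q" and oq: "odd q" and q3: "3 \<le> q"
    obtain e where e: "k = 4*e" "odd e" "3*k \<le> 8*1+4" using kform[of 1 k q] mk oq q3 m by auto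
    then have "e = 1" by presburger
    then have "k = 4" using e by simp
    then show "\<not> int (2^(mpar 1)+1) dvd x*(2^k+1)" using xs m by (auto simp: dvd_eq_mod_eq_0)
  qed
  have m0: "mpar 1 > 0" using m by simp
  show ?thesis using crit[OF m0 nz H] np by simp
qed

lemma delta_tge2:
  assumes t: "t \<ge> 2" and x: "x \<in> {delta2 t, delta3 t, delta4 t, delta5 t}"
  shows "card (cyc_coset (npar t) x) = 2 * mpar t"
proof -
  have t1: "t \<ge> 1" using t by simp
  have np: "npar t = 2^(mpar t)+1" by (simp add: npar_def)
  have m: "mpar t = 8*t+4" by (simp add: mpar_def)
  have n: "int (npar t) = 2^(8*t+4)+1" by (rule npar_int)
  have d17: "17 * delta1 t = 3 * int (npar t)" using n_facts[OF t1] by simp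
  obtain j where j: "delta1 t + 45 = 128 * j" using n_facts(2)[OF t1] by (metis dvd_def)
  have jd: "(delta1 t + 45) div 128 = j" using j by simp
  have d2: "delta2 t = delta1 t - j" using t jd by (simp add: delta2_def)
  obtain c where c: "x = delta1 t - j - c"
     and cr: "c \<in> {0, 90, 96, 480} \<and> t = 2 \<or> c \<in> {0, 90, 23040, 23130} \<and> t \<ge> 3"
  proof (cases "t = 2")
    case True
    then have "x \<in> {delta1 t - j - 0, delta1 t - j - 90, delta1 t - j - 96, delta1 t - j - 480}"
      using x d2 by (simp add: delta3_def delta4_def delta5_def)
    then show ?thesis using that True by auto
  next
    case False
    then have "x \<in> {delta1 t - j - 0, delta1 t - j - 90, delta1 t - j - 23040, delta1 t - j - 23130}"
      using x d2 t by (simp add: delta3_def delta4_def delta5_def)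
    then show ?thesis using that False t by auto
  qed
  have c0: "0 \<le> c" and cb: "c \<le> 23130" and c2: "t = 2 \<Longrightarrow> c \<le> 480" using cr by auto
  define D where "D = 45 + 128*c"
  have DD: "128*(delta1 t - x) - delta1 t = D" using c j D_def by (simp add: algebra_simps)
  have D0: "0 < D" using c0 D_def by simp
  have pw0: "(2::int)^20 \<le> 2^(8*t+4)" by (rule power_increasing) (use t in auto)
  then have pw: "1048576 \<le> (2::int)^(8*t+4)" by simp
  have xpos: "0 < x" using c j cb d17 n pw by linarith
  have xlt: "x < int (npar t)" using c j c0 d17 n pw by linarith
  have nz: "x mod int (2^(mpar t)+1) \<noteq> 0" using xpos xlt np by simp
  have H: "\<forall>k q. mpar t = k*q \<longrightarrow> odd q \<longrightarrow> 3 \<le> q \<longrightarrow> \<not> int (2^(mpar t)+1) dvd x*(2^k+1)"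
  proof (intro allI impI notI)
    fix k q assume mk: "mpar t = k*q" and oq: "odd q" and q3: "3 \<le> q"
      and dv: "int (2^(mpar t)+1) dvd x*(2^k+1)"
    obtain e where e: "k = 4*e" "odd e" "3*k \<le> 8*t+4" using kform[of t k q] mk oq q3 m by auto
    have nk: "int (npar t) = 2^(k*q)+1" using n m mk by simp
    obtain N where N: "int (npar t) = (2^k+1)*N" using dvd_n[OF oq, of k] nk by (metis dvd_def)
    obtain B where B: "(2::int)^k+1 = 17*B" using dvd_17[OF e(2)] e(1) by (metis dvd_def)
    have "17 * delta1 t = 3 * (((2::int)^k+1)*N)" using d17 N by simp
    also have "\<dots> = 17 * (3*B*N)" unfolding B by (simp add: ac_simps)
    finally have "17 * delta1 t = 17 * (3*B*N)" .
    then have "delta1 t = N * (3*B)" by simp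
    then have Nd1: "N dvd delta1 t" by simp
    have "(2^k+1)*N dvd x*(2^k+1)" using dv N np by simp
    then have "N * (2^k+1) dvd x * (2^k+1)" by (simp add: mult.commute)
    moreover have "(0::int) < 2^k" by simp
    then have "(2::int)^k+1 \<noteq> 0" by linarith
    ultimately have Nx: "N dvd x" using dvd_mult_cancel_right by blast
    have "N dvd 128*(delta1 t - x) - delta1 t" using Nd1 Nx by simp
    then have "N dvd D" using DD by simp
    then have ND: "N \<le> D" using D0 zdvd_imp_le by blast
    have Nbig: "N > D"
    proof (cases "t \<le> 3")
      case True
      then have "e = 1" using e by presburger
      then have k4: "k = 4" using e by simp
      show ?thesis
      proof (cases "t = 2")
        case True
        then have "17 * N = 1048577" using N n k4 by simp
        then have "N = 61681" by simp
        then show ?thesis using c2 True D_def by simp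
      next
        case False
        then have "t = 3" using \<open>t \<le> 3\<close> t by simp
        then have "17 * N = 268435457" using N n k4 by simp
        then have "N = 15790321" by simp
        then show ?thesis using cb D_def by simp
      qed
    next
      case False
      show ?thesis
      proof (rule ccontr)
        assume "\<not> N > D"
        then have Nle: "N \<le> 2960685" using cb D_def by simp
        have kk: "k + 23 \<le> 8*t+4" using e False by linarith
        have "(2::int)^(8*t+4)+1 = N*(2^k+1)" using N n by simp
        also have "\<dots> \<le> 2960685*(2^k+1)" using Nle by (intro mult_right_mono) auto
        also have "\<dots> < 8388608 * 2^k"
        proof -
          have "(1::int) \<le> 2^k" by simp
          then show ?thesis unfolding distrib_left by linarith
        qed
        also have "\<dots> = 2^(k+23)" by (simp add: power_add mult_ac)
        also have "\<dots> \<le> (2::int)^(8*t+4)" by (rule power_increasing) (use kk in auto)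
        finally show False by simp
      qed
    qed
    show False using ND Nbig by simp
  qed
  have m0: "mpar t > 0" using m by simp
  show ?thesis using crit[OF m0 nz H] np by simp
qed


theorem lemma5p3:
  fixes t :: nat
  assumes "t \<ge> 1"
  shows "(\<forall>x :: int.
            ((1 \<le> x \<and> x \<le> 2^(4*t+3) + 2^(4*t+2) + 2^(4*t+1) + 1)
             \<or> x \<in> {delta2 t, delta3 t, delta4 t, delta5 t})
            \<longrightarrow> card (cyc_coset (npar t) x) = 2 * mpar t)
         \<and> card (cyc_coset (npar t) (delta1 t)) = 8"
proof (intro conjI allI impI)
  fix x :: int
  assume h: "(1 \<le> x \<and> x \<le> 2^(4*t+3) + 2^(4*t+2) + 2^(4*t+1) + 1)
             \<or> x \<in> {delta2 t, delta3 t, delta4 t, delta5 t}"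
  then show "card (cyc_coset (npar t) x) = 2 * mpar t"
  proof
    assume "1 \<le> x \<and> x \<le> 2^(4*t+3) + 2^(4*t+2) + 2^(4*t+1) + 1"
    then show ?thesis using small_ok[OF assms] by blast
  next
    assume x: "x \<in> {delta2 t, delta3 t, delta4 t, delta5 t}"
    show ?thesis
    proof (cases "t = 1")
      case True
      then show ?thesis using delta_t1 x by simp
    next
      case False
      then show ?thesis using delta_tge2 x assms by simp
    qed
  qed
next
  show "card (cyc_coset (npar t) (delta1 t)) = 8" by (rule delta1_ok[OF assms])
qed

end
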